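(* Let $\mathbb{S}^1=\mathbb{R}/\mathbb{Z}$ and consider $u_t+H(u)_x=0$ on $\mathbb{S}^1\times\mathbb{R}^+$, $u(x,0)=u_0(x)$, with $H$ locally Lipschitz, $u>a>0$, $f(u)=H(u)/u$, $f^+=\max(f,0)$, $f^-=\max(-f,0)$ (possibly shifted by a constant $k\ge0$). Let $u(x,t,\epsilon)$ solve $$\partial_t u_\epsilon=\frac1\epsilon\Big[u_{\epsilon-1}f^+(\hat u_{\epsilon-1/2})-u_\epsilon f^+(\hat u_{\epsilon+1/2})-u_\epsilon f^-(\hat u_{\epsilon-1/2})+u_{\epsilon+1}f^-(\hat u_{\epsilon+1/2})\Big],\qquad u(x,0,\epsilon)=u_0(x),$$ where $u_\epsilon=u(x,t,\epsilon)$, $u_{\epsilon\pm1}=u(x\pm\epsilon,t,\epsilon)$ and $\hat u_{\epsilon\pm1/2}$ are reconstructed states (Lipschitz functions of finitely many shifted values of $u$ reproducing constants), and assume $|u(x,t,\epsilon)|\le\bar M:=\|u_0\|_\infty$. Let $\phi\in C^1(\mathbb{S}^1)$. Then for all $\Delta t>0$, $$\int_{\mathbb{S}^1}\big(u(x,t+\Delta t,\epsilon)-u(x,t,\epsilon)\big)\phi(x)\,dx\le N\,\|\nabla\phi\|_\infty\,\Delta t\,\mu(\mathbb{S}^1),$$ where $\mu(\mathbb{S}^1)$ is the measure of $\mathbb{S}^1$ and $N=\max_{|u|\le\bar M}\big(|u|(|f^+(\hat u)|+|f^-(\hat u)|)\big)$, with $\hat u$ denoting the corresponding reconstructed state. 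*)

theory Defs
  imports "HOL-Analysis.Analysis"
begin

definition flux_f :: "(real \<Rightarrow> real) \<Rightarrow> real \<Rightarrow> real" where
  "flux_f H w = H w / w"

definition fplus :: "(real \<Rightarrow> real) \<Rightarrow> real \<Rightarrow> real \<Rightarrow> real" where
  "fplus H k w = max (flux_f H w) 0 + k"

definition fminus :: "(real \<Rightarrow> real) \<Rightarrow> real \<Rightarrow> real \<Rightarrow> real" where
  "fminus H k w = max (- flux_f H w) 0 + k"

text \<open>Reconstruction: R applied to the values of u at the stencil offsets S
  (x + j*eps for j in S). Interface state at x+eps/2.\<close>

definition recon_plus ::
  "(real list \<Rightarrow> real) \<Rightarrow> int list \<Rightarrow> real \<Rightarrow> (real \<Rightarrow> real) \<Rightarrow> real \<Rightarrow> real" where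
  "recon_plus R S eps v x = R (map (\<lambda>j. v (x + of_int j * eps)) S)"

definition admissible_recon :: "(real list \<Rightarrow> real) \<Rightarrow> int list \<Rightarrow> bool" where
  "admissible_recon R S \<longleftrightarrow>
     (\<exists>L. \<forall>xs ys. length xs = length S \<longrightarrow> length ys = length S \<longrightarrow>
        \<bar>R xs - R ys\<bar> \<le> L * (\<Sum>i<length S. \<bar>xs ! i - ys ! i\<bar>)) \<and>
     (\<forall>c. R (replicate (length S) c) = c)"

definition loc_lipschitz :: "(real \<Rightarrow> real) \<Rightarrow> bool" where
  "loc_lipschitz H \<longleftrightarrow> (\<forall>x. \<exists>e>0. \<exists>L. L-lipschitz_on (ball x e) H)"

definition sup_norm :: "(real \<Rightarrow> real) \<Rightarrow> real" where
  "sup_norm g = Sup (range (\<lambda>x. \<bar>g x\<bar>))"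

definition N_set :: "(real \<Rightarrow> real) \<Rightarrow> real \<Rightarrow> (real list \<Rightarrow> real) \<Rightarrow> int list \<Rightarrow> real \<Rightarrow> real set" where
  "N_set H k R S M = {\<bar>v\<bar> * (\<bar>fplus H k (R xs)\<bar> + \<bar>fminus H k (R xs)\<bar>) | v xs.
      \<bar>v\<bar> \<le> M \<and> length xs = length S \<and> (\<forall>y\<in>set xs. \<bar>y\<bar> \<le> M)}"

end

theory Submission
  imports Defs
begin


lemma int_list_meas:
  fixes h :: "int \<Rightarrow> 'a \<Rightarrow> int"
  assumes "\<And>j. h j \<in> measurable M (count_space UNIV)"
  shows "(\<lambda>x. map (\<lambda>j. h j x) S) \<in> measurable M (count_space UNIV)"
proof (induction S)
  case Nil
  then show ?case by simp
next
  case (Cons j S)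
  show ?case
    using measurable_Pair[OF assms[of j] Cons] measurable_compose[of _ M "count_space UNIV \<Otimes>\<^sub>M count_space UNIV" "(\<lambda>(a,l). a # l)" "count_space UNIV"]
    by (auto simp: case_prod_unfold)
qed


lemma floor_approx: "\<bar>of_int \<lfloor>c * a\<rfloor> / c - a\<bar> \<le> 1 / (c::real)" if "c > 0"
proof -
  have "of_int \<lfloor>c * a\<rfloor> \<le> c*a" "c * a < of_int \<lfloor>c * a\<rfloor> + 1" by linarith+
  then have h: "\<bar>of_int \<lfloor>c * a\<rfloor> - c * a\<bar> \<le> 1" by linarith
  have e: "of_int \<lfloor>c*a\<rfloor> / c - a = (of_int \<lfloor>c*a\<rfloor> - c*a) / c" using that by (simp add: field_simps)
  show ?thesis unfolding e using that h by (simp add: abs_divide divide_right_mono)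
qed


lemma recon_meas:
  assumes adm: "admissible_recon R S" and v: "v \<in> borel_measurable borel"
  shows "(\<lambda>x. recon_plus R S eps v x) \<in> borel_measurable borel"
proof -
  obtain L where L: "\<And>xs ys. length xs = length S \<Longrightarrow> length ys = length S \<Longrightarrow>
        \<bar>R xs - R ys\<bar> \<le> L * (\<Sum>i<length S. \<bar>xs ! i - ys ! i\<bar>)"
    using adm unfolding admissible_recon_def by blast
  define c where "c m = real (Suc m)" for m
  have cpos: "c m > 0" for m by (simp add: c_def)
  define ap where "ap m x = R (map (\<lambda>j. of_int \<lfloor>c m * v (x + of_int j * eps)\<rfloor> / c m) S)" for m x
  have apm: "ap m \<in> borel_measurable borel" for m
  proof -
    have g: "(\<lambda>x. map (\<lambda>j. \<lfloor>c m * v (x + of_int j * eps)\<rfloor>) S) \<in> measurable borel (count_space UNIV)"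
      by (rule int_list_meas) (intro measurable_compose[OF _ measurable_real_floor] borel_measurable_times measurable_compose[OF _ v] borel_measurable_const borel_measurable_continuous_onI continuous_intros)
    have "(\<lambda>x. (\<lambda>l x. R (map (\<lambda>z. of_int z / c m) l)) (map (\<lambda>j. \<lfloor>c m * v (x + of_int j * eps)\<rfloor>) S) x) \<in> borel_measurable borel"
      by (rule measurable_compose_countable[OF _ g]) simp
    then show ?thesis unfolding ap_def by (simp add: o_def)
  qed
  have conv: "(\<lambda>m. ap m x) \<longlonglongrightarrow> recon_plus R S eps v x" for x
  proof -
    have "(\<lambda>m. ap m x - recon_plus R S eps v x) \<longlonglongrightarrow> 0"
    proof (rule Lim_null_comparison)
      show "\<forall>\<^sub>F m in sequentially. norm (ap m x - recon_plus R S eps v x) \<le> \<bar>L\<bar> * real (length S) * inverse (real (Suc m))"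
      proof (intro always_eventually allI)
        fix m
        have "\<bar>ap m x - recon_plus R S eps v x\<bar> \<le> L * (\<Sum>i<length S. \<bar>of_int \<lfloor>c m * v (x + of_int (S!i) * eps)\<rfloor> / c m - v (x + of_int (S!i) * eps)\<bar>)"
          unfolding ap_def recon_plus_def using L[of "map (\<lambda>j. of_int \<lfloor>c m * v (x + of_int j * eps)\<rfloor> / c m) S" "map (\<lambda>j. v (x + of_int j * eps)) S"]
          by simp
        also have "\<dots> \<le> \<bar>L\<bar> * (\<Sum>i<length S. \<bar>of_int \<lfloor>c m * v (x + of_int (S!i) * eps)\<rfloor> / c m - v (x + of_int (S!i) * eps)\<bar>)"
          by (intro mult_right_mono) (auto intro: sum_nonneg)
        also have "\<dots> \<le> \<bar>L\<bar> * (\<Sum>i<length S. 1 / c m)"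
          by (intro mult_left_mono sum_mono floor_approx cpos) auto
        also have "\<dots> = \<bar>L\<bar> * real (length S) * inverse (real (Suc m))"
          by (simp add: c_def divide_inverse)
        finally show "norm (ap m x - recon_plus R S eps v x) \<le> \<bar>L\<bar> * real (length S) * inverse (real (Suc m))" by simp
      qed
      show "(\<lambda>m. \<bar>L\<bar> * real (length S) * inverse (real (Suc m))) \<longlonglongrightarrow> 0"
        by (intro tendsto_mult_right_zero LIMSEQ_inverse_real_of_nat)
    qed
    then show ?thesis by (simp add: LIM_zero_iff)
  qed
  show ?thesis by (rule borel_measurable_LIMSEQ_real[OF conv apm])
qed



lemma per_nat: assumes per: "\<And>x. g (x + 1) = g (x::real)" shows "g (x + real n) = g x"
proof (induction n)
  case 0 then show ?case by simp
next
  case (Suc n)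
  have "g (x + real (Suc n)) = g ((x + real n) + 1)" by (simp add: add_ac)
  then show ?case using per[of "x + real n"] Suc.IH by simp
qed

lemma per_range: assumes per: "\<And>x. g (x + 1) = g (x::real)" shows "\<exists>y\<in>{0..1}. g x = g y"
proof -
  have "g (x - real n) = g x" for n x
    using per_nat[of g, OF per, of "x - real n" n] by simp
  have f: "of_int \<lfloor>x\<rfloor> \<le> x" "x < of_int \<lfloor>x\<rfloor> + 1" by linarith+
  then have y01: "x - of_int \<lfloor>x\<rfloor> \<in> {0..1}" unfolding atLeastAtMost_iff by linarith
  have "g (x - of_int \<lfloor>x\<rfloor>) = g x"
  proof (cases "floor x \<ge> 0")
    case True
    then have "x - of_int \<lfloor>x\<rfloor> = x - real (nat \<lfloor>x\<rfloor>)" by simp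
    then show ?thesis using \<open>\<And>n x. g (x - real n) = g x\<close> by simp
  next
    case False
    have g1: "g (x + real (nat (- floor x))) = g x"
      by (rule per_nat[of g, OF per])
    have e1: "real (nat (- floor x)) = - real_of_int (floor x)" using False by (subst of_nat_nat) auto
    have "x + real (nat (- floor x)) = x - of_int (floor x)" using e1 by (simp only:)
    then show ?thesis using g1 by metis
  qed
  then show ?thesis using y01 by metis
qed

lemma per_bdd:
  fixes g :: "real \<Rightarrow> real"
  assumes per: "\<And>x. g (x + 1) = g (x::real)" and c: "continuous_on UNIV g"
  shows "bdd_above (range (\<lambda>x. \<bar>g x\<bar>))" "\<And>x. \<bar>g x\<bar> \<le> Sup (range (\<lambda>x. \<bar>g x\<bar>))"
proof -
  have "compact (g ` {0..1})" by (intro compact_continuous_image continuous_on_subset[OF c]) auto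
  then have "bounded (g ` {0..1})" by (rule compact_imp_bounded)
  then obtain B where "\<forall>y\<in>g ` {0..1}. norm y \<le> B" unfolding bounded_iff by blast
  then have B: "\<And>y. y \<in> {0..1} \<Longrightarrow> \<bar>g y\<bar> \<le> B" by auto
  have "\<bar>g x\<bar> \<le> B" for x using per_range[of g, OF per, of x] B by auto
  then show b: "bdd_above (range (\<lambda>x. \<bar>g x\<bar>))" by (intro bdd_aboveI2[where M=B]) auto
  show "\<bar>g x\<bar> \<le> Sup (range (\<lambda>x. \<bar>g x\<bar>))" for x by (rule cSup_upper[OF _ b]) auto
qed

lemma deriv_lip:
  fixes f f' :: "real \<Rightarrow> real"
  assumes d: "\<And>y. y \<in> {a..b} \<Longrightarrow> (f has_real_derivative f' y) (at y within {a..b})"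
    and bd: "\<And>y. y \<in> {a..b} \<Longrightarrow> \<bar>f' y\<bar> \<le> C" and ab: "a \<le> b"
  shows "\<bar>f b - f a\<bar> \<le> C * (b - a)"
proof (cases "a = b")
  case True then show ?thesis by simp
next
  case False
  then have "a < b" using ab by simp
  have "\<exists>z\<in>{a<..<b}. f b - f a = (\<lambda>y. (*) (f' y)) z (b - a)"
    by (rule mvt_simple[OF \<open>a < b\<close>, of f "\<lambda>y. (*) (f' y)"]) (use d in \<open>auto simp: has_field_derivative_def\<close>)
  then obtain z where z: "z \<in> {a<..<b}" "f b - f a = f' z * (b - a)" by auto
  have "\<bar>f' z * (b - a)\<bar> = \<bar>f' z\<bar> * (b - a)" using ab by (simp add: abs_mult)
  also have "\<dots> \<le> C * (b - a)" using bd[of z] z(1) ab by (intro mult_right_mono) auto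
  finally show ?thesis using z by simp
qed

lemma bint:
  fixes f :: "real \<Rightarrow> real"
  assumes m: "f \<in> borel_measurable borel" and b: "\<And>x. x \<in> {a..b} \<Longrightarrow> \<bar>f x\<bar> \<le> B"
  shows "set_integrable lborel {a..b} f" "f integrable_on {a..b}"
proof -
  show si: "set_integrable lborel {a..b} f"
    unfolding set_integrable_def
    by (rule integrableI_bounded_set[where A="{a..b}" and B=B])
       (use m b in \<open>auto simp: measurable_lborel1 indicator_def emeasure_lborel_Icc_eq\<close>)
  show "f integrable_on {a..b}" by (rule set_borel_integral_eq_integral(1)[OF si])
qed

lemma per_int_step:
  fixes g :: "real \<Rightarrow> real"
  assumes per: "\<And>x. g (x + 1) = g x" and int: "\<And>c d. g integrable_on {c..d}"
    and ab: "a \<le> b" "b \<le> a + 1"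
  shows "integral {a..a+1} g = integral {b..b+1} g"
proof -
  have 1: "integral {a..a+1} g = integral {a..b} g + integral {b..a+1} g"
    using Henstock_Kurzweil_Integration.integral_combine[OF ab int] by simp
  have 2: "integral {b..b+1} g = integral {b..a+1} g + integral {a+1..b+1} g"
    using Henstock_Kurzweil_Integration.integral_combine[of b "a+1" "b+1" g] ab int by simp
  have "integral {a+1..b+1} g = integral {a+1-1..b+1-1} (\<lambda>x. g (x + 1))"
    using integral_shift_real_ivl[of "a+1" 1 "b+1" g] by simp
  also have "\<dots> = integral {a..b} g" by (simp add: per)
  finally show ?thesis using 1 2 by simp
qed

lemma per_int:
  fixes g :: "real \<Rightarrow> real"
  assumes per: "\<And>x. g (x + 1) = g x" and int: "\<And>c d. g integrable_on {c..d}"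
  shows "integral {a..a+1} g = integral {0..1} g"
proof -
  have *: "\<And>a b. a \<le> b \<Longrightarrow> b \<le> a + real n \<Longrightarrow> integral {a..a+1} g = integral {b..b+1} g" for n
  proof (induction n)
    case 0 then show ?case by simp
  next
    case (Suc n)
    fix a b :: real assume h: "a \<le> b" "b \<le> a + real (Suc n)"
    show "integral {a..a+1} g = integral {b..b+1} g"
    proof (cases "b \<le> a + 1")
      case True then show ?thesis using per_int_step[OF per int h(1)] by simp
    next
      case False
      have "integral {a..a+1} g = integral {a+1..a+1+1} g" using per_int_step[OF per int, of a "a+1"] by simp
      also have "\<dots> = integral {b..b+1} g" using Suc.IH[of "a+1" b] h False by simp
      finally show ?thesis .
    qed
  qed
  show ?thesis
  proof (cases "a \<le> 0")
    case True
    obtain n where "-a \<le> real n" using real_arch_simple by blast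
    then show ?thesis using *[of a 0 n] True by simp
  next
    case False
    obtain n where "a \<le> real n" using real_arch_simple by blast
    then show ?thesis using *[of 0 a n] False by simp
  qed
qed

theorem lemma2:
  fixes H :: "real \<Rightarrow> real" and u0 :: "real \<Rightarrow> real"
    and u :: "real \<Rightarrow> real \<Rightarrow> real"  \<comment> \<open>u x t, for the fixed eps\<close>
    and R :: "real list \<Rightarrow> real" and S :: "int list"
    and \<phi> \<phi>' :: "real \<Rightarrow> real"
    and a k eps t \<Delta>t :: real
  assumes H_lip: "loc_lipschitz H"
    and a_pos: "a > 0" and k_nonneg: "k \<ge> 0" and eps_pos: "eps > 0"
    and recon: "admissible_recon R S"
    and u0_per: "\<And>x. u0 (x + 1) = u0 x"
    and u0_bdd: "bounded (range u0)"
    and u_per: "\<And>x t. t \<ge> 0 \<Longrightarrow> u (x + 1) t = u x t"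
    and u_meas: "\<And>t. t \<ge> 0 \<Longrightarrow> (\<lambda>x. u x t) \<in> borel_measurable borel"
    and u_init: "\<And>x. u x 0 = u0 x"
    and u_pos: "\<And>x t. t \<ge> 0 \<Longrightarrow> u x t > a"
    and u_bound: "\<And>x t. t \<ge> 0 \<Longrightarrow> \<bar>u x t\<bar> \<le> sup_norm u0"
    and u_ode: "\<And>x t. t \<ge> 0 \<Longrightarrow>
      ((\<lambda>s. u x s) has_real_derivative
         (1 / eps) * ( u (x - eps) t * fplus H k (recon_plus R S eps (\<lambda>y. u y t) (x - eps))
                     - u x t * fplus H k (recon_plus R S eps (\<lambda>y. u y t) x)
                     - u x t * fminus H k (recon_plus R S eps (\<lambda>y. u y t) (x - eps))
                     + u (x + eps) t * fminus H k (recon_plus R S eps (\<lambda>y. u y t) x)))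
       (at t within {0..})"
    and phi_per: "\<And>x. \<phi> (x + 1) = \<phi> x"
    and phi_deriv: "\<And>x. (\<phi> has_real_derivative \<phi>' x) (at x)"
    and phi'_cont: "continuous_on UNIV \<phi>'"
    and N_bdd: "bdd_above (N_set H k R S (sup_norm u0))"
    and t_nonneg: "t \<ge> 0" and dt_pos: "\<Delta>t > 0"
  shows "(\<integral>x\<in>{0..1}. (u x (t + \<Delta>t) - u x t) * \<phi> x \<partial>lborel)
           \<le> Sup (N_set H k R S (sup_norm u0)) * sup_norm \<phi>' * \<Delta>t * measure lborel {0..(1::real)}"
  proof -
  define M where "M = sup_norm u0"
  define N where "N = Sup (N_set H k R S M)"
  define P where "P = sup_norm \<phi>'"
  define uh where "uh s x = recon_plus R S eps (\<lambda>y. u y s) x" for s x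
  define G where "G s x = u x s * fplus H k (uh s x) - u (x + eps) s * fminus H k (uh s x)" for s x
  define D where "D s x = (1/eps) * (G s (x - eps) - G s x)" for s x
  define C where "C = 2 * N / eps"
  have fp0: "fplus H k w \<ge> 0" for w using k_nonneg by (simp add: fplus_def)
  have fm0: "fminus H k w \<ge> 0" for w using k_nonneg by (simp add: fminus_def)
  have ode: "((\<lambda>s. u x s) has_real_derivative D s x) (at s within {0..})" if s: "s \<ge> 0" for x s
  proof -
    have "D s x = (1 / eps) * ( u (x - eps) s * fplus H k (recon_plus R S eps (\<lambda>y. u y s) (x - eps))
                     - u x s * fplus H k (recon_plus R S eps (\<lambda>y. u y s) x)
                     - u x s * fminus H k (recon_plus R S eps (\<lambda>y. u y s) (x - eps))
                     + u (x + eps) s * fminus H k (recon_plus R S eps (\<lambda>y. u y s) x))"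
      unfolding D_def G_def uh_def by (simp add: algebra_simps)
    then show ?thesis using u_ode[OF s, of x] by simp
  qed
  have Gb: "\<bar>G s x\<bar> \<le> N" if s: "s \<ge> 0" for s x
  proof -
    let ?xs = "map (\<lambda>j. u (x + of_int j * eps) s) S"
    let ?v = "max (u x s) (u (x + eps) s)"
    let ?p = "fplus H k (uh s x)" and ?m = "fminus H k (uh s x)"
    have uh_eq: "uh s x = R ?xs" by (simp add: uh_def recon_plus_def)
    have p1: "u x s > 0" "u (x+eps) s > 0" using u_pos[OF s] a_pos by (meson less_trans)+
    have vM: "\<bar>?v\<bar> \<le> M" using u_bound[OF s, of x] u_bound[OF s, of "x+eps"] by (auto simp: M_def max_def)
    have xsM: "\<forall>y\<in>set ?xs. \<bar>y\<bar> \<le> M" using u_bound[OF s] by (auto simp: M_def)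
    have mem: "\<bar>?v\<bar> * (\<bar>fplus H k (R ?xs)\<bar> + \<bar>fminus H k (R ?xs)\<bar>) \<in> N_set H k R S M"
      unfolding N_set_def by (rule CollectI, rule exI[of _ ?v], rule exI[of _ ?xs]) (use vM xsM in auto)
    have le: "\<bar>?v\<bar> * (\<bar>fplus H k (R ?xs)\<bar> + \<bar>fminus H k (R ?xs)\<bar>) \<le> N"
      unfolding N_def M_def by (rule cSup_upper[OF mem[unfolded M_def] N_bdd])
    have t1: "u x s * ?p \<le> ?v * ?p" by (intro mult_right_mono fp0) auto
    have t2: "u (x+eps) s * ?m \<le> ?v * ?m" by (intro mult_right_mono fm0) auto
    have t3: "0 \<le> u x s * ?p" "0 \<le> u (x+eps) s * ?m" using p1 fp0 fm0 by auto
    have "\<bar>G s x\<bar> \<le> ?v * ?p + ?v * ?m" unfolding G_def using t1 t2 t3 by linarith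
    also have "\<dots> = \<bar>?v\<bar> * (\<bar>fplus H k (R ?xs)\<bar> + \<bar>fminus H k (R ?xs)\<bar>)"
      using p1 fp0 fm0 uh_eq by (simp add: algebra_simps)
    finally show ?thesis using le by linarith
  qed
  have N0: "N \<ge> 0" using Gb[of 0 0] by linarith
  have Db: "\<bar>D s x\<bar> \<le> C" if s: "s \<ge> 0" for s x
  proof -
    have "\<bar>G s (x - eps) - G s x\<bar> \<le> 2 * N" using Gb[OF s, of x] Gb[OF s, of "x - eps"] by linarith
    then have "\<bar>G s (x - eps) - G s x\<bar> / eps \<le> 2 * N / eps" using eps_pos by (simp add: divide_right_mono)
    then show ?thesis using eps_pos by (simp add: D_def C_def abs_mult)
  qed
  have ulip: "\<bar>u x s2 - u x s1\<bar> \<le> C * \<bar>s2 - s1\<bar>" if "s1 \<ge> 0" "s2 \<ge> 0" for x s1 s2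
  proof -
    have *: "\<bar>u x b - u x a\<bar> \<le> C * (b - a)" if "0 \<le> a" "a \<le> b" for a b
      by (rule deriv_lip[where f'="\<lambda>s. D s x"]) (use that in \<open>auto intro: DERIV_subset[OF ode] Db\<close>)
    show ?thesis
    proof (cases "s1 \<le> s2")
      case True then show ?thesis using *[of s1 s2] that by simp
    next
      case False then show ?thesis using *[of s2 s1] that by (simp add: abs_minus_commute)
    qed
  qed
  have Hcont: "continuous_on UNIV H"
  proof (intro continuous_at_imp_continuous_on ballI)
    fix x :: real
    obtain e L where "e > 0" "L-lipschitz_on (ball x e) H" using H_lip unfolding loc_lipschitz_def by blast
    then show "isCont H x"
      using continuous_on_interior[OF lipschitz_on_continuous_on] by (metis centre_in_ball interior_ball)
  qed
  have Hm[measurable]: "H \<in> borel_measurable borel" by (rule borel_measurable_continuous_onI[OF Hcont])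
  have shift_m: "(\<lambda>x. f (x + c)) \<in> borel_measurable borel" if "f \<in> borel_measurable borel" for f :: "real \<Rightarrow> real" and c
    by (rule measurable_compose[OF _ that]) (intro borel_measurable_continuous_onI continuous_intros)
  have Gm: "G s \<in> borel_measurable borel" if s: "s \<ge> 0" for s
  proof -
    have [measurable]: "(\<lambda>x. u x s) \<in> borel_measurable borel" by (rule u_meas[OF s])
    have [measurable]: "(\<lambda>x. u (x + eps) s) \<in> borel_measurable borel" by (rule shift_m[OF u_meas[OF s]])
    have [measurable]: "uh s \<in> borel_measurable borel"
      using recon_meas[OF recon u_meas[OF s], of eps] by (simp add: uh_def[abs_def])
    show ?thesis unfolding G_def[abs_def] fplus_def fminus_def flux_f_def by measurable
  qed
  have Dm: "D s \<in> borel_measurable borel" if s: "s \<ge> 0" for s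
  proof -
    have [measurable]: "G s \<in> borel_measurable borel" by (rule Gm[OF s])
    have [measurable]: "(\<lambda>x. G s (x + - eps)) \<in> borel_measurable borel" by (rule shift_m[OF Gm[OF s]])
    show ?thesis unfolding D_def[abs_def] by simp
  qed
  have phicont: "continuous_on UNIV \<phi>"
    by (intro continuous_at_imp_continuous_on ballI) (rule DERIV_isCont[OF phi_deriv])
  have [measurable]: "\<phi> \<in> borel_measurable borel" by (rule borel_measurable_continuous_onI[OF phicont])
  have phi'per: "\<phi>' (x + 1) = \<phi>' x" for x
  proof -
    have "((\<lambda>x. \<phi> (x + 1)) has_real_derivative \<phi>' (x + 1)) (at x)"
      using phi_deriv[of "x + 1"] DERIV_shift by blast
    then have "(\<phi> has_real_derivative \<phi>' (x + 1)) (at x)" using phi_per by simp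
    then show ?thesis using phi_deriv[of x] DERIV_unique by blast
  qed
  have Pb: "\<bar>\<phi>' x\<bar> \<le> P" for x unfolding P_def sup_norm_def by (rule per_bdd(2)[OF phi'per phi'_cont])
  define B where "B = sup_norm \<phi>"
  have Bb: "\<bar>\<phi> x\<bar> \<le> B" for x unfolding B_def sup_norm_def by (rule per_bdd(2)[OF phi_per phicont])
  have B0: "B \<ge> 0" using Bb[of 0] by linarith
  have phidiff: "\<bar>\<phi> (x + eps) - \<phi> x\<bar> \<le> P * eps" for x
    using deriv_lip[of x "x + eps" \<phi> \<phi>' P] eps_pos Pb by (auto intro: has_field_derivative_at_within phi_deriv)
  have phim: "\<phi> \<in> borel_measurable borel" by (rule borel_measurable_continuous_onI[OF phicont])
  have M0: "M \<ge> 0" using u_bound[OF t_nonneg, of 0] by (simp add: M_def)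
  have Iint: "(\<lambda>x. u x s * \<phi> x) integrable_on {c..d}" if s: "s \<ge> 0" for s c d
  proof (rule bint(2)[where B="M*B"])
    show "(\<lambda>x. u x s * \<phi> x) \<in> borel_measurable borel"
      by (rule borel_measurable_times[OF u_meas[OF s] phim])
    show "\<bar>u x s * \<phi> x\<bar> \<le> M * B" for x
      unfolding abs_mult by (intro mult_mono Bb) (use u_bound[OF s] M0 in \<open>auto simp: M_def\<close>)
  qed
  define J where "J s = integral {0..1} (\<lambda>x. D s x * \<phi> x)" for s
  have Jb: "\<bar>J s\<bar> \<le> N * P" if s: "s \<ge> 0" for s
  proof -
    define g1 where "g1 x = G s (x - eps) * \<phi> x" for x
    define g2 where "g2 x = G s x * \<phi> x" for x
    define g3 where "g3 x = G s x * \<phi> (x + eps)" for x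
    have Gsh: "(\<lambda>x. G s (x - eps)) \<in> borel_measurable borel" using shift_m[OF Gm[OF s], of "- eps"] by simp
    have phish: "(\<lambda>x. \<phi> (x + eps)) \<in> borel_measurable borel" by (rule shift_m[OF phim])
    have gb: "\<bar>G s y * \<phi> z\<bar> \<le> N * B" for y z
      unfolding abs_mult by (intro mult_mono Bb Gb s N0) auto
    have i1: "g1 integrable_on {c..d}" for c d
    proof (rule bint(2)[where B="N*B"])
      show "g1 \<in> borel_measurable borel" unfolding g1_def[abs_def] by (rule borel_measurable_times[OF Gsh phim])
      show "\<bar>g1 x\<bar> \<le> N * B" for x unfolding g1_def by (rule gb)
    qed
    have i2: "g2 integrable_on {c..d}" for c d
    proof (rule bint(2)[where B="N*B"])
      show "g2 \<in> borel_measurable borel" unfolding g2_def[abs_def] by (rule borel_measurable_times[OF Gm[OF s] phim])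
      show "\<bar>g2 x\<bar> \<le> N * B" for x unfolding g2_def by (rule gb)
    qed
    have i3: "g3 integrable_on {c..d}" for c d
    proof (rule bint(2)[where B="N*B"])
      show "g3 \<in> borel_measurable borel" unfolding g3_def[abs_def] by (rule borel_measurable_times[OF Gm[OF s] phish])
      show "\<bar>g3 x\<bar> \<le> N * B" for x unfolding g3_def by (rule gb)
    qed
    have uper: "u (x + 1) s = u x s" for x by (rule u_per[OF s])
    have uhper: "uh s (x + 1) = uh s x" for x
    proof -
      have "u (x + 1 + of_int j * eps) s = u (x + of_int j * eps) s" for j
        using uper[of "x + of_int j * eps"] by (simp add: add_ac)
      then show ?thesis unfolding uh_def recon_plus_def by simp
    qed
    have g3per: "g3 (x + 1) = g3 x" for x
    proof -
      have "u (x + 1 + eps) s = u (x + eps) s" using uper[of "x + eps"] by (simp add: add_ac)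
      moreover have "\<phi> (x + 1 + eps) = \<phi> (x + eps)" using phi_per[of "x + eps"] by (simp add: add_ac)
      ultimately show ?thesis unfolding g3_def G_def using uper[of x] uhper[of x] by simp
    qed
    have "(\<lambda>x. g1 (x + eps)) = g3" by (rule ext) (simp add: g1_def g3_def)
    then have e1: "integral {0..1} g1 = integral {-eps..1-eps} g3"
      using integral_shift_real_ivl[of 0 eps 1 g1] by simp
    have e2: "integral {-eps..-eps+1} g3 = integral {0..1} g3" by (rule per_int) (use g3per i3 in auto)
    have e3: "-eps + 1 = 1 - eps" by simp
    have "(\<lambda>x. D s x * \<phi> x) = (\<lambda>x. (1/eps) * (g1 x - g2 x))"
      by (rule ext) (simp add: D_def g1_def g2_def algebra_simps)
    then have "J s = (1/eps) * (integral {0..1} g1 - integral {0..1} g2)"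
      unfolding J_def using integral_diff[OF i1 i2] by simp
    also have "\<dots> = (1/eps) * (integral {0..1} g3 - integral {0..1} g2)" using e1 e2 e3 by simp
    also have "\<dots> = (1/eps) * integral {0..1} (\<lambda>x. g3 x - g2 x)" using integral_diff[OF i3 i2] by simp
    finally have Jeq: "J s = (1/eps) * integral {0..1} (\<lambda>x. g3 x - g2 x)" .
    have bnd: "norm (g3 x - g2 x) \<le> N * (P * eps)" if "x \<in> {0..1}" for x
    proof -
      have "\<bar>g3 x - g2 x\<bar> = \<bar>G s x\<bar> * \<bar>\<phi> (x + eps) - \<phi> x\<bar>"
        by (simp add: g3_def g2_def abs_mult[symmetric] algebra_simps)
      also have "\<dots> \<le> N * (P * eps)" by (intro mult_mono Gb s phidiff N0) auto
      finally show ?thesis by simp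
    qed
    have "norm (integral {0..1} (\<lambda>x. g3 x - g2 x)) \<le> integral {0..1::real} (\<lambda>x::real. N * (P * eps))"
      by (rule Henstock_Kurzweil_Integration.integral_norm_bound_integral[OF integrable_diff[OF i3[of 0 1] i2[of 0 1]] integrable_const_ivl]) (erule bnd)
    then have "\<bar>integral {0..1} (\<lambda>x. g3 x - g2 x)\<bar> \<le> N * (P * eps)" by simp
    then have "\<bar>integral {0..1} (\<lambda>x. g3 x - g2 x)\<bar> / eps \<le> N * P"
      using eps_pos by (simp add: pos_divide_le_eq mult.assoc)
    then show ?thesis using eps_pos unfolding Jeq by (simp add: abs_mult)
  qed
  define I where "I s = integral {0..1} (\<lambda>x. u x s * \<phi> x)" for s
  have Ider: "(I has_real_derivative J s) (at s within {0..})" if s: "s \<ge> 0" for s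
    unfolding has_field_derivative_iff tendsto_at_iff_sequentially
  proof (intro allI impI)
    fix X :: "nat \<Rightarrow> real" assume X: "\<forall>i. X i \<in> {0..} - {s}" and Xl: "X \<longlonglongrightarrow> s"
    have X0: "X n \<ge> 0" "X n \<noteq> s" for n using X by auto
    define q where "q n x = (u x (X n) - u x s) / (X n - s) * \<phi> x" for n x
    have qeq: "(I (X n) - I s) / (X n - s) = integral {0..1} (q n)" for n
    proof -
      have "I (X n) - I s = integral {0..1} (\<lambda>x. u x (X n) * \<phi> x - u x s * \<phi> x)"
        unfolding I_def by (rule integral_diff[symmetric]) (use Iint X0 s in auto)
      moreover have "q n = (\<lambda>x. (u x (X n) * \<phi> x - u x s * \<phi> x) / (X n - s))"
        by (rule ext) (simp add: q_def times_divide_eq_left left_diff_distrib)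
      ultimately show ?thesis by simp
    qed
    have qb: "norm (q n x) \<le> C * B" for n x
    proof -
      have "\<bar>u x (X n) - u x s\<bar> \<le> C * \<bar>X n - s\<bar>" by (rule ulip) (use X0 s in auto)
      then have "\<bar>u x (X n) - u x s\<bar> / \<bar>X n - s\<bar> \<le> C" using X0(2)[of n]
        by (simp add: pos_divide_le_eq)
      moreover have "0 \<le> C" using N0 eps_pos by (simp add: C_def)
      ultimately show ?thesis unfolding q_def real_norm_def abs_mult abs_divide
        using Bb[of x] by (intro mult_mono) auto
    qed
    have qint: "q n integrable_on {0..1}" for n
    proof (rule bint(2)[where B="C*B"])
      show "q n \<in> borel_measurable borel" unfolding q_def[abs_def]
        by (intro borel_measurable_times borel_measurable_divide borel_measurable_diff u_meas phim borel_measurable_const X0 s)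
      show "\<bar>q n x\<bar> \<le> C * B" for x using qb[of n x] by simp
    qed
    have conv: "(\<lambda>n. q n x) \<longlonglongrightarrow> D s x * \<phi> x" for x
    proof -
      have "((\<lambda>y. (u x y - u x s) / (y - s)) \<circ> X) \<longlonglongrightarrow> D s x"
        using ode[OF s, of x] X Xl unfolding has_field_derivative_iff tendsto_at_iff_sequentially by blast
      then show ?thesis unfolding q_def by (intro tendsto_mult_right) (simp add: o_def)
    qed
    have "(\<lambda>n. integral {0..1} (q n)) \<longlonglongrightarrow> integral {0..1} (\<lambda>x. D s x * \<phi> x)"
      by (rule dominated_convergence(2)[OF qint integrable_const_ivl qb conv])
    then show "((\<lambda>y. (I y - I s) / (y - s)) \<circ> X) \<longlonglongrightarrow> J s"
      unfolding J_def o_def qeq .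
  qed
  have Idiff: "\<bar>I (t + \<Delta>t) - I t\<bar> \<le> N * P * (t + \<Delta>t - t)"
    by (rule deriv_lip[where f'=J]) (use t_nonneg dt_pos in \<open>auto intro: DERIV_subset[OF Ider] Jb\<close>)
  have lhs: "(\<integral>x\<in>{0..1}. (u x (t + \<Delta>t) - u x t) * \<phi> x \<partial>lborel) = I (t + \<Delta>t) - I t"
  proof -
    have t2: "t + \<Delta>t \<ge> 0" using t_nonneg dt_pos by simp
    have m: "(\<lambda>x. (u x (t + \<Delta>t) - u x t) * \<phi> x) \<in> borel_measurable borel"
      by (intro borel_measurable_times borel_measurable_diff u_meas phim t2 t_nonneg)
    have b: "\<bar>(u x (t + \<Delta>t) - u x t) * \<phi> x\<bar> \<le> (2 * M) * B" for x
      unfolding abs_mult using u_bound[OF t2, of x] u_bound[OF t_nonneg, of x] Bb[of x] M0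
      by (intro mult_mono) (auto simp: M_def)
    have "(\<integral>x\<in>{0..1}. (u x (t + \<Delta>t) - u x t) * \<phi> x \<partial>lborel)
        = integral {0..1} (\<lambda>x. (u x (t + \<Delta>t) - u x t) * \<phi> x)"
      by (rule set_borel_integral_eq_integral(2)[OF bint(1)[OF m b]])
    also have "\<dots> = integral {0..1} (\<lambda>x. u x (t + \<Delta>t) * \<phi> x - u x t * \<phi> x)"
      by (simp add: left_diff_distrib)
    also have "\<dots> = I (t + \<Delta>t) - I t" unfolding I_def
      by (rule integral_diff) (use Iint t2 t_nonneg in auto)
    finally show ?thesis .
  qed
  show ?thesis unfolding lhs using Idiff by (simp add: N_def M_def P_def)
qed
end
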